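(* Let $m,n\ge1$ and let $a_{ij}\ge1$ be real numbers ($1\le i\le n$, $1\le j\le m$). Then $$\prod_{i=1}^n\Bigl\{\prod_{j=1}^ma_{ij}-\prod_{j=1}^m(a_{ij}-1)\Bigr\}\ \ge\ \prod_{j=1}^m\prod_{i=1}^na_{ij}-\prod_{j=1}^m\Bigl(\prod_{i=1}^na_{ij}-1\Bigr).$$ Equality holds if and only if one of the following holds: (i) $m=1$ or $n=1$; (ii) there is $j$ with $a_{ij}=1$ for all $i$; (iii) there is $i_0$ with $a_{ij}=1$ for all $i\ne i_0$ and all $j$. *)

theory Defs
  imports Complex_Main
begin

end

theory Submission
  imports Defs
begin

lemma aux_mult_eq:
  fixes a b c d :: real
  assumes "0 \<le> a" "a \<le> b" "0 \<le> c" "c \<le> d"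
  shows "a*c = b*d \<longleftrightarrow> b*d = 0 \<or> (a = b \<and> c = d)"
proof
  assume h: "a*c = b*d"
  show "b*d = 0 \<or> (a = b \<and> c = d)"
  proof (cases "b*d = 0")
    case False
    hence "b > 0" "d > 0" using assms by (auto simp: less_le)
    have "a*c \<le> a*d" using assms by (simp add: mult_left_mono)
    moreover have "a*d \<le> b*d" using assms by (simp add: mult_right_mono)
    ultimately have "a*d = b*d" using h by linarith
    hence "a = b" using \<open>d>0\<close> by simp
    hence "a*c = a*d" using \<open>a*d = b*d\<close> h by simp
    hence "c = d" using \<open>a=b\<close> \<open>b>0\<close> by simp
    thus ?thesis using \<open>a=b\<close> by simp
  qed simp
next
  assume "b*d = 0 \<or> (a = b \<and> c = d)"
  moreover have "a*c \<le> b*d" using assms by (meson mult_mono order_trans)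
  moreover have "0 \<le> a*c" using assms by simp
  ultimately show "a*c = b*d" by auto
qed

lemma prod_eq_gen:
  fixes f g :: "'a \<Rightarrow> real"
  assumes "finite J" "\<And>j. j\<in>J \<Longrightarrow> 0 \<le> f j" "\<And>j. j\<in>J \<Longrightarrow> f j \<le> g j"
  shows "prod f J \<le> prod g J \<and> (prod f J = prod g J \<longleftrightarrow> (\<exists>j\<in>J. g j = 0) \<or> (\<forall>j\<in>J. f j = g j))"
  using assms
proof (induction J rule: finite_induct)
  case empty
  then show ?case by simp
next
  case (insert k J)
  have IH: "prod f J \<le> prod g J" "prod f J = prod g J \<longleftrightarrow> (\<exists>j\<in>J. g j = 0) \<or> (\<forall>j\<in>J. f j = g j)"
    using insert by auto
  have F0: "0 \<le> prod f J" using insert by (simp add: prod_nonneg)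
  have fk: "0 \<le> f k" "f k \<le> g k" using insert by auto
  have le: "f k * prod f J \<le> g k * prod g J" using fk F0 IH(1) by (meson mult_mono order_trans)
  have G0: "prod g J = 0 \<longleftrightarrow> (\<exists>j\<in>J. g j = 0)" using insert by simp
  have eq: "f k * prod f J = g k * prod g J \<longleftrightarrow> g k * prod g J = 0 \<or> (f k = g k \<and> prod f J = prod g J)"
    using aux_mult_eq[OF fk F0 IH(1)] .
  show ?case using insert le eq G0 IH(2) by auto
qed

lemma AB:
  fixes u v :: "'a \<Rightarrow> real"
  assumes "finite J" "\<forall>j\<in>J. 0 \<le> u j" "\<forall>j\<in>J. 0 \<le> v j"
  shows "prod (\<lambda>j. u j*v j + u j) J \<le> prod (\<lambda>j. u j*v j + u j + v j) J \<and>
    (prod (\<lambda>j. u j*v j + u j) J = prod (\<lambda>j. u j*v j + u j + v j) J \<longleftrightarrow>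
      (\<exists>j\<in>J. u j = 0 \<and> v j = 0) \<or> (\<forall>j\<in>J. v j = 0))"
proof -
  have h: "prod (\<lambda>j. u j*v j + u j) J \<le> prod (\<lambda>j. u j*v j + u j + v j) J \<and>
    (prod (\<lambda>j. u j*v j + u j) J = prod (\<lambda>j. u j*v j + u j + v j) J \<longleftrightarrow>
      (\<exists>j\<in>J. u j*v j + u j + v j = 0) \<or> (\<forall>j\<in>J. u j*v j + u j = u j*v j + u j + v j))"
  proof (rule prod_eq_gen[OF assms(1)])
    fix j assume "j \<in> J"
    hence "0 \<le> u j" "0 \<le> v j" using assms by auto
    thus "0 \<le> u j*v j + u j" "u j*v j + u j \<le> u j*v j + u j + v j" by simp_all
  qed
  have e1: "(\<exists>j\<in>J. u j*v j + u j + v j = 0) \<longleftrightarrow> (\<exists>j\<in>J. u j = 0 \<and> v j = 0)"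
  proof (rule bex_cong[OF refl])
    fix j assume "j \<in> J"
    hence "0 \<le> u j" "0 \<le> v j" using assms by auto
    show "u j*v j + u j + v j = 0 \<longleftrightarrow> u j = 0 \<and> v j = 0"
    proof (rule iffI)
      assume "u j*v j + u j + v j = 0"
      moreover have "0 \<le> u j * v j" using \<open>0 \<le> u j\<close> \<open>0 \<le> v j\<close> by simp
      ultimately show "u j = 0 \<and> v j = 0" using \<open>0 \<le> u j\<close> \<open>0 \<le> v j\<close> by linarith
    qed simp

  qed
  have e2: "(\<forall>j\<in>J. u j*v j + u j = u j*v j + u j + v j) \<longleftrightarrow> (\<forall>j\<in>J. v j = 0)" by simp
  show ?thesis using h unfolding e1 e2 .
qed

lemma boolcomb:
  assumes "P1 \<longleftrightarrow> F0 \<or> uk \<or> vk" "P2 \<longleftrightarrow> Z \<or> V \<or> uk" "P3 \<longleftrightarrow> Z \<or> U \<or> vk"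
    "F0 \<longleftrightarrow> c1 \<or> Z \<or> U \<or> V" "U \<and> V \<longrightarrow> Z" "c1 \<longrightarrow> (Z \<longleftrightarrow> U \<and> V)"
  shows "(P1 \<and> P2 \<and> P3) \<longleftrightarrow> False \<or> ((uk \<and> vk) \<or> Z) \<or> (uk \<and> U) \<or> (vk \<and> V)"
  using assms by blast

lemma key:
  fixes u v :: "'a \<Rightarrow> real"
  assumes "finite J" "\<forall>j\<in>J. 0 \<le> u j" "\<forall>j\<in>J. 0 \<le> v j"
  shows "prod (\<lambda>j. u j*v j + u j) J + prod (\<lambda>j. u j*v j + v j) J
      \<le> prod (\<lambda>j. u j*v j + u j + v j) J + prod (\<lambda>j. u j*v j) J \<and>
    (prod (\<lambda>j. u j*v j + u j) J + prod (\<lambda>j. u j*v j + v j) J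
      = prod (\<lambda>j. u j*v j + u j + v j) J + prod (\<lambda>j. u j*v j) J \<longleftrightarrow>
      card J \<le> 1 \<or> (\<exists>j\<in>J. u j = 0 \<and> v j = 0) \<or> (\<forall>j\<in>J. u j = 0) \<or> (\<forall>j\<in>J. v j = 0))"
  using assms
proof (induction J rule: finite_induct)
  case empty
  then show ?case by simp
next
  case (insert k J)
  define A where "A = prod (\<lambda>j. u j*v j + u j + v j) J"
  define B where "B = prod (\<lambda>j. u j*v j + u j) J"
  define C where "C = prod (\<lambda>j. u j*v j + v j) J"
  define D where "D = prod (\<lambda>j. u j*v j) J"
  define Z where "Z = (\<exists>j\<in>J. u j = 0 \<and> v j = 0)"
  define U where "U = (\<forall>j\<in>J. u j = 0)"
  define V where "V = (\<forall>j\<in>J. v j = 0)"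
  have uv: "0 \<le> u k" "0 \<le> v k" using insert.prems by auto
  have pJ: "\<forall>j\<in>J. 0 \<le> u j" "\<forall>j\<in>J. 0 \<le> v j" using insert.prems by auto
  note IH0 = insert.IH[OF pJ]
  have IH: "B + C \<le> A + D" "B + C = A + D \<longleftrightarrow> card J \<le> 1 \<or> Z \<or> U \<or> V"
    using IH0 unfolding A_def B_def C_def D_def Z_def U_def V_def by auto
  have hAB: "B \<le> A" "A = B \<longleftrightarrow> Z \<or> V"
    using AB[OF insert(1) pJ] unfolding A_def B_def Z_def V_def by auto
  have f1: "(\<lambda>j. v j*u j + v j) = (\<lambda>j. u j*v j + v j)" by (simp add: mult.commute)
  have f2: "(\<lambda>j. v j*u j + v j + u j) = (\<lambda>j. u j*v j + u j + v j)" by (simp add: algebra_simps)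
  have f3: "(\<exists>j\<in>J. v j = 0 \<and> u j = 0) = Z" unfolding Z_def by blast
  have hAC0: "C \<le> A \<and> (C = A \<longleftrightarrow> Z \<or> U)"
    using AB[OF insert(1) pJ(2) pJ(1)] unfolding A_def C_def U_def f1 f2 f3 by blast
  have hAC: "C \<le> A" "A = C \<longleftrightarrow> Z \<or> U" using hAC0 by auto
  define d where "d = u k * v k"
  have d0: "0 \<le> d" using uv d_def by simp
  have ident: "(d + u k) * B + (d + v k) * C + (A + D - B - C) * d + (A - B) * u k + (A - C) * v k
      = (d + u k + v k) * A + d * D" by (simp add: algebra_simps)
  have t1: "0 \<le> (A + D - B - C) * d" using IH(1) d0 by simp
  have t2: "0 \<le> (A - B) * u k" using hAB(1) uv by simp
  have t3: "0 \<le> (A - C) * v k" using hAC(1) uv by simp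
  have lhs: "prod (\<lambda>j. u j*v j + u j) (insert k J) + prod (\<lambda>j. u j*v j + v j) (insert k J)
      = (d + u k) * B + (d + v k) * C"
    using insert(1,2) unfolding B_def C_def d_def by simp
  have rhs: "prod (\<lambda>j. u j*v j + u j + v j) (insert k J) + prod (\<lambda>j. u j*v j) (insert k J)
      = (d + u k + v k) * A + d * D"
    using insert(1,2) unfolding A_def D_def d_def by simp
  have eq0: "(d + u k) * B + (d + v k) * C = (d + u k + v k) * A + d * D \<longleftrightarrow>
     (A + D - B - C) * d = 0 \<and> (A - B) * u k = 0 \<and> (A - C) * v k = 0"
    using ident t1 t2 t3 by linarith
  have dz: "d = 0 \<longleftrightarrow> u k = 0 \<or> v k = 0" using d_def by simp
  have cins: "card (insert k J) = Suc (card J)" using insert(1,2) by simp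
  have Zi: "(\<exists>j\<in>insert k J. u j = 0 \<and> v j = 0) = ((u k = 0 \<and> v k = 0) \<or> Z)" unfolding Z_def by auto
  have Ui: "(\<forall>j\<in>insert k J. u j = 0) = (u k = 0 \<and> U)" unfolding U_def by auto
  have Vi: "(\<forall>j\<in>insert k J. v j = 0) = (v k = 0 \<and> V)" unfolding V_def by auto
  have bool: "((A + D - B - C) * d = 0 \<and> (A - B) * u k = 0 \<and> (A - C) * v k = 0) \<longleftrightarrow>
      card (insert k J) \<le> 1 \<or> ((u k = 0 \<and> v k = 0) \<or> Z) \<or> (u k = 0 \<and> U) \<or> (v k = 0 \<and> V)"
  proof (cases "J = {}")
    case True
    then show ?thesis unfolding A_def B_def C_def D_def by simp
  next
    case False
    have UVZ: "U \<and> V \<longrightarrow> Z" using False unfolding U_def V_def Z_def by auto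
    have m1: "(A + D - B - C) * d = 0 \<longleftrightarrow> A + D = B + C \<or> u k = 0 \<or> v k = 0" using dz by auto
    have m2: "(A - B) * u k = 0 \<longleftrightarrow> Z \<or> V \<or> u k = 0" using hAB by auto
    have m3: "(A - C) * v k = 0 \<longleftrightarrow> Z \<or> U \<or> v k = 0" using hAC by auto
    have c1: "card J = 1 \<longrightarrow> (Z \<longleftrightarrow> U \<and> V)"
    proof
      assume "card J = 1"
      then obtain j where J: "J = {j}" by (auto simp: card_Suc_eq)
      show "Z \<longleftrightarrow> U \<and> V" unfolding Z_def U_def V_def J by simp
    qed
    have cJ: "card J \<ge> 1" using False insert(1) by (simp add: Suc_leI card_gt_0_iff)
    have cI: "card (insert k J) \<le> 1 \<longleftrightarrow> False" using cins cJ by simp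
    have IH2: "A + D = B + C \<longleftrightarrow> card J = 1 \<or> Z \<or> U \<or> V" using IH(2) cJ by auto
    show ?thesis unfolding cI by (rule boolcomb[OF m1 m2 m3 IH2 UVZ c1])
  qed
  have le: "(d + u k) * B + (d + v k) * C \<le> (d + u k + v k) * A + d * D"
    using ident t1 t2 t3 by linarith
  show ?case
    unfolding lhs rhs Zi Ui Vi using le eq0 bool by blast
qed

lemma two_row:
  fixes x y :: "nat \<Rightarrow> real"
  assumes "finite J" "\<forall>j\<in>J. 1 \<le> x j" "\<forall>j\<in>J. 1 \<le> y j"
  shows "(\<Prod>j\<in>J. x j * y j) - (\<Prod>j\<in>J. x j * y j - 1)
           \<le> ((\<Prod>j\<in>J. x j) - (\<Prod>j\<in>J. x j - 1)) * ((\<Prod>j\<in>J. y j) - (\<Prod>j\<in>J. y j - 1))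
    \<and> ((\<Prod>j\<in>J. x j * y j) - (\<Prod>j\<in>J. x j * y j - 1)
           = ((\<Prod>j\<in>J. x j) - (\<Prod>j\<in>J. x j - 1)) * ((\<Prod>j\<in>J. y j) - (\<Prod>j\<in>J. y j - 1))
       \<longleftrightarrow> card J \<le> 1 \<or> (\<exists>j\<in>J. x j = 1 \<and> y j = 1) \<or> (\<forall>j\<in>J. x j = 1) \<or> (\<forall>j\<in>J. y j = 1))"
proof -
  define u where "u = (\<lambda>j. x j - 1)"
  define v where "v = (\<lambda>j. y j - 1)"
  have pu: "\<forall>j\<in>J. 0 \<le> u j" "\<forall>j\<in>J. 0 \<le> v j" using assms unfolding u_def v_def by auto
  note K = key[OF assms(1) pu]
  have e1: "(\<lambda>j. u j*v j + u j + v j) = (\<lambda>j. x j * y j - 1)" unfolding u_def v_def by (simp add: algebra_simps)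
  have e2: "(\<lambda>j. u j*v j + u j) = (\<lambda>j. (x j - 1) * y j)" unfolding u_def v_def by (simp add: algebra_simps)
  have e3: "(\<lambda>j. u j*v j + v j) = (\<lambda>j. x j * (y j - 1))" unfolding u_def v_def by (simp add: algebra_simps)
  have e4: "(\<lambda>j. u j*v j) = (\<lambda>j. (x j - 1) * (y j - 1))" unfolding u_def v_def by (simp add: algebra_simps)
  have z1: "(\<exists>j\<in>J. u j = 0 \<and> v j = 0) \<longleftrightarrow> (\<exists>j\<in>J. x j = 1 \<and> y j = 1)" unfolding u_def v_def by simp
  have z2: "(\<forall>j\<in>J. u j = 0) \<longleftrightarrow> (\<forall>j\<in>J. x j = 1)" unfolding u_def by simp
  have z3: "(\<forall>j\<in>J. v j = 0) \<longleftrightarrow> (\<forall>j\<in>J. y j = 1)" unfolding v_def by simp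
  have expand: "((\<Prod>j\<in>J. x j) - (\<Prod>j\<in>J. x j - 1)) * ((\<Prod>j\<in>J. y j) - (\<Prod>j\<in>J. y j - 1))
     = (\<Prod>j\<in>J. x j * y j) - (\<Prod>j\<in>J. (x j - 1) * y j) - (\<Prod>j\<in>J. x j * (y j - 1))
       + (\<Prod>j\<in>J. (x j - 1) * (y j - 1))"
    unfolding prod.distrib by (simp add: algebra_simps)
  show ?thesis using K unfolding e1 e2 e3 e4 z1 z2 z3 expand by linarith
qed

lemma prod_one_iff:
  fixes g :: "nat \<Rightarrow> real"
  assumes "finite I" "\<forall>i\<in>I. 1 \<le> g i"
  shows "1 \<le> prod g I \<and> (prod g I = 1 \<longleftrightarrow> (\<forall>i\<in>I. g i = 1))"
proof -
  have "prod (\<lambda>_. 1) I \<le> prod g I \<and> (prod (\<lambda>_. 1) I = prod g I \<longleftrightarrow> (\<exists>i\<in>I. g i = 0) \<or> (\<forall>i\<in>I. 1 = g i))"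
    by (rule prod_eq_gen) (use assms in auto)
  moreover have "\<not> (\<exists>i\<in>I. g i = 0)" using assms by force
  ultimately show ?thesis by auto
qed

lemma diff_pos:
  fixes x :: "nat \<Rightarrow> real"
  assumes "finite J" "J \<noteq> {}" "\<forall>j\<in>J. 1 \<le> x j"
  shows "(\<Prod>j\<in>J. x j - 1) < (\<Prod>j\<in>J. x j)"
proof -
  have h: "prod (\<lambda>j. x j - 1) J \<le> prod x J \<and> (prod (\<lambda>j. x j - 1) J = prod x J \<longleftrightarrow> (\<exists>j\<in>J. x j = 0) \<or> (\<forall>j\<in>J. x j - 1 = x j))"
    by (rule prod_eq_gen) (use assms in auto)
  moreover have "\<not> (\<exists>j\<in>J. x j = 0)" using assms by force
  moreover have "\<not> (\<forall>j\<in>J. x j - 1 = x j)" using assms(2) by auto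
  ultimately show ?thesis by auto
qed

lemma main_ind:
  fixes m n :: nat and a :: "nat \<Rightarrow> nat \<Rightarrow> real"
  assumes "m \<ge> 1" and "n \<ge> 1"
    and "\<And>i j. i \<in> {1..n} \<Longrightarrow> j \<in> {1..m} \<Longrightarrow> a i j \<ge> 1"
  shows "(\<Prod>i=1..n. (\<Prod>j=1..m. a i j) - (\<Prod>j=1..m. a i j - 1))
           \<ge> (\<Prod>j=1..m. \<Prod>i=1..n. a i j) - (\<Prod>j=1..m. (\<Prod>i=1..n. a i j) - 1)
    \<and> ((\<Prod>i=1..n. (\<Prod>j=1..m. a i j) - (\<Prod>j=1..m. a i j - 1))
           = (\<Prod>j=1..m. \<Prod>i=1..n. a i j) - (\<Prod>j=1..m. (\<Prod>i=1..n. a i j) - 1)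
         \<longleftrightarrow> (m = 1 \<or> n = 1
              \<or> (\<exists>j\<in>{1..m}. \<forall>i\<in>{1..n}. a i j = 1)
              \<or> (\<exists>i0\<in>{1..n}. \<forall>i\<in>{1..n}. \<forall>j\<in>{1..m}. i \<noteq> i0 \<longrightarrow> a i j = 1)))"
  using assms(2,3)
proof (induction n)
  case 0
  then show ?case by simp
next
  case (Suc n)
  show ?case
  proof (cases "n = 0")
    case True
    then show ?thesis by simp
  next
    case False
    have ha: "\<And>i j. i \<in> {1..n} \<Longrightarrow> j \<in> {1..m} \<Longrightarrow> a i j \<ge> 1" using Suc.prems by auto
    note IH = Suc.IH[OF _ ha]
    define L where "L = (\<Prod>i=1..n. (\<Prod>j=1..m. a i j) - (\<Prod>j=1..m. a i j - 1))"
    define Cc where "Cc = (\<lambda>j. \<Prod>i=1..n. a i j)"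
    define b where "b = (\<lambda>j. a (Suc n) j)"
    define R where "R = (\<Prod>j=1..m. Cc j) - (\<Prod>j=1..m. Cc j - 1)"
    define PQ where "PQ = (\<Prod>j=1..m. b j) - (\<Prod>j=1..m. b j - 1)"
    define E where "E = (m = 1 \<or> n = 1
              \<or> (\<exists>j\<in>{1..m}. \<forall>i\<in>{1..n}. a i j = 1)
              \<or> (\<exists>i0\<in>{1..n}. \<forall>i\<in>{1..n}. \<forall>j\<in>{1..m}. i \<noteq> i0 \<longrightarrow> a i j = 1))"
    have IH': "R \<le> L" "L = R \<longleftrightarrow> E" using IH False unfolding L_def R_def Cc_def E_def by auto
    have hb: "\<forall>j\<in>{1..m}. 1 \<le> b j" using Suc.prems unfolding b_def by auto
    have hC: "\<forall>j\<in>{1..m}. 1 \<le> Cc j \<and> (Cc j = 1 \<longleftrightarrow> (\<forall>i\<in>{1..n}. a i j = 1))"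
      unfolding Cc_def using prod_one_iff ha by auto
    have PQpos: "0 < PQ" using diff_pos[of "{1..m}" b] hb assms(1) unfolding PQ_def by auto
    have TR: "(\<Prod>j=1..m. Cc j * b j) - (\<Prod>j=1..m. Cc j * b j - 1) \<le> R * PQ \<and>
       ((\<Prod>j=1..m. Cc j * b j) - (\<Prod>j=1..m. Cc j * b j - 1) = R * PQ \<longleftrightarrow>
        m \<le> 1 \<or> (\<exists>j\<in>{1..m}. Cc j = 1 \<and> b j = 1) \<or> (\<forall>j\<in>{1..m}. Cc j = 1) \<or> (\<forall>j\<in>{1..m}. b j = 1))"
      using two_row[of "{1..m}" Cc b] hb hC unfolding R_def PQ_def by auto
    have Lsuc: "(\<Prod>i=1..Suc n. (\<Prod>j=1..m. a i j) - (\<Prod>j=1..m. a i j - 1)) = L * PQ"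
      unfolding L_def PQ_def b_def by (simp add: prod.cl_ivl_Suc)
    have Rsuc: "(\<Prod>j=1..m. \<Prod>i=1..Suc n. a i j) - (\<Prod>j=1..m. (\<Prod>i=1..Suc n. a i j) - 1)
       = (\<Prod>j=1..m. Cc j * b j) - (\<Prod>j=1..m. Cc j * b j - 1)"
      unfolding Cc_def b_def by (simp add: prod.cl_ivl_Suc)
    have LR: "R * PQ \<le> L * PQ" using IH'(1) PQpos by simp
    have LReq: "L * PQ = R * PQ \<longleftrightarrow> L = R" using PQpos by simp
    have bool: "(E \<and> (m \<le> 1 \<or> (\<exists>j\<in>{1..m}. Cc j = 1 \<and> b j = 1) \<or> (\<forall>j\<in>{1..m}. Cc j = 1) \<or> (\<forall>j\<in>{1..m}. b j = 1)))
      \<longleftrightarrow> (m = 1 \<or> Suc n = 1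
              \<or> (\<exists>j\<in>{1..m}. \<forall>i\<in>{1..Suc n}. a i j = 1)
              \<or> (\<exists>i0\<in>{1..Suc n}. \<forall>i\<in>{1..Suc n}. \<forall>j\<in>{1..m}. i \<noteq> i0 \<longrightarrow> a i j = 1))"
    proof (cases "m = 1")
      case True
      then show ?thesis unfolding E_def by simp
    next
      case mF: False
      define col' where "col' = (\<exists>j\<in>{1..m}. \<forall>i\<in>{1..Suc n}. a i j = 1)"
      define row' where "row' = (\<exists>i0\<in>{1..Suc n}. \<forall>i\<in>{1..Suc n}. \<forall>j\<in>{1..m}. i \<noteq> i0 \<longrightarrow> a i j = 1)"
      have iS: "\<And>i. i \<in> {1..Suc n} \<longleftrightarrow> i \<in> {1..n} \<or> i = Suc n" using False by auto
      have F1: "(\<exists>j\<in>{1..m}. Cc j = 1 \<and> b j = 1) \<longleftrightarrow> col'"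
        unfolding col'_def b_def using hC iS by (metis (no_types, lifting))
      have F2: "(\<forall>j\<in>{1..m}. Cc j = 1) \<Longrightarrow> row'"
      proof -
        assume h: "\<forall>j\<in>{1..m}. Cc j = 1"
        show row' unfolding row'_def
        proof (rule bexI[of _ "Suc n"])
          show "\<forall>i\<in>{1..Suc n}. \<forall>j\<in>{1..m}. i \<noteq> Suc n \<longrightarrow> a i j = 1"
            using h hC iS by blast
        qed simp
      qed
      have F3: "(\<forall>j\<in>{1..m}. b j = 1) \<Longrightarrow> E \<Longrightarrow> col' \<or> row'"
      proof -
        assume hb1: "\<forall>j\<in>{1..m}. b j = 1" and "E"
        hence "n = 1 \<or> (\<exists>j\<in>{1..m}. \<forall>i\<in>{1..n}. a i j = 1)
              \<or> (\<exists>i0\<in>{1..n}. \<forall>i\<in>{1..n}. \<forall>j\<in>{1..m}. i \<noteq> i0 \<longrightarrow> a i j = 1)"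
          using mF unfolding E_def by simp
        moreover
        { assume "n = 1"
          hence "row'" unfolding row'_def using hb1 b_def by (intro bexI[of _ 1]) (auto simp: le_Suc_eq) }
        moreover
        { assume "\<exists>j\<in>{1..m}. \<forall>i\<in>{1..n}. a i j = 1"
          hence "col'" unfolding col'_def using hb1 b_def iS by metis }
        moreover
        { assume "\<exists>i0\<in>{1..n}. \<forall>i\<in>{1..n}. \<forall>j\<in>{1..m}. i \<noteq> i0 \<longrightarrow> a i j = 1"
          then obtain i0 where "i0 \<in> {1..n}" "\<forall>i\<in>{1..n}. \<forall>j\<in>{1..m}. i \<noteq> i0 \<longrightarrow> a i j = 1" by blast
          hence "row'" unfolding row'_def using hb1 b_def iS by (intro bexI[of _ i0]) auto }
        ultimately show ?thesis by blast
      qed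
      have F4: "row' \<Longrightarrow> E \<and> ((\<forall>j\<in>{1..m}. Cc j = 1) \<or> (\<forall>j\<in>{1..m}. b j = 1))"
      proof -
        assume row'
        then obtain i0 where i0: "i0 \<in> {1..Suc n}" and h: "\<forall>i\<in>{1..Suc n}. \<forall>j\<in>{1..m}. i \<noteq> i0 \<longrightarrow> a i j = 1"
          unfolding row'_def by blast
        show ?thesis
        proof (cases "i0 = Suc n")
          case True
          hence all: "\<forall>i\<in>{1..n}. \<forall>j\<in>{1..m}. a i j = 1" using h iS by auto
          hence "\<forall>j\<in>{1..m}. Cc j = 1" using hC by auto
          moreover have E unfolding E_def using all False by (intro disjI2) (auto intro!: bexI[of _ 1])
          ultimately show ?thesis by simp
        next
          case nF: False
          hence i0n: "i0 \<in> {1..n}" using i0 iS by auto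
          have "\<forall>j\<in>{1..m}. b j = 1" using h nF unfolding b_def by auto
          moreover have E unfolding E_def using h i0n iS by blast
          ultimately show ?thesis by simp
        qed
      qed
      have F5: "col' \<Longrightarrow> E"
      proof -
        assume col'
        then obtain j where "j \<in> {1..m}" "\<forall>i\<in>{1..Suc n}. a i j = 1" unfolding col'_def by blast
        thus E unfolding E_def using iS by blast
      qed
      have rhs: "(m = 1 \<or> Suc n = 1 \<or> col' \<or> row') \<longleftrightarrow> col' \<or> row'" using mF False by simp
      show ?thesis unfolding col'_def[symmetric] row'_def[symmetric] rhs
        using F1 F2 F3 F4 F5 mF by auto
    qed
    show ?thesis unfolding Lsuc Rsuc using TR LR LReq IH'(2) bool by linarith
  qed
qed


theorem mainTheorem3:
  fixes m n :: nat and a :: "nat \<Rightarrow> nat \<Rightarrow> real"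
  assumes "m \<ge> 1" and "n \<ge> 1"
    and "\<And>i j. i \<in> {1..n} \<Longrightarrow> j \<in> {1..m} \<Longrightarrow> a i j \<ge> 1"
  shows "(\<Prod>i=1..n. (\<Prod>j=1..m. a i j) - (\<Prod>j=1..m. a i j - 1))
           \<ge> (\<Prod>j=1..m. \<Prod>i=1..n. a i j) - (\<Prod>j=1..m. (\<Prod>i=1..n. a i j) - 1)
    \<and> ((\<Prod>i=1..n. (\<Prod>j=1..m. a i j) - (\<Prod>j=1..m. a i j - 1))
           = (\<Prod>j=1..m. \<Prod>i=1..n. a i j) - (\<Prod>j=1..m. (\<Prod>i=1..n. a i j) - 1)
         \<longleftrightarrow> (m = 1 \<or> n = 1
              \<or> (\<exists>j\<in>{1..m}. \<forall>i\<in>{1..n}. a i j = 1)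
              \<or> (\<exists>i0\<in>{1..n}. \<forall>i\<in>{1..n}. \<forall>j\<in>{1..m}. i \<noteq> i0 \<longrightarrow> a i j = 1)))"
    using main_ind[OF assms] .

end
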